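(* For every substitution $\sigma$ and every freshness context $\nabla$: $\sigma$ respects $\nabla$ if and only if $\nabla\sigma\neq\bot$.
   Context: Nominal terms. Atoms $a,b,c,\dots$ and variables $X,Y,\dots$ are sorted; a permutation $\pi$ is a finite sequence of swappings $(a\,b)$ of same-sorted atoms, with inverse $\pi^{-1}$ the reversed sequence; nominal terms are $t::=f(t_1,\dots,t_n)\mid a\mid a.t\mid \pi\cdot X$, and $\pi\bullet t$ denotes the action of permutations on terms ($(a\,b)$ swaps $a$ and $b$ everywhere, including bound positions, and $(a\,b)\bullet(\pi\cdot X)=((a\,b)\pi)\cdot X$; sequences act right to left). A freshness context is a finite set of constraints $a\# X$. A substitution maps variables to terms of the same sort; $t\sigma$ is its application, which allows atom capture (e.g. $(a.X)\{X\mapsto a\}=a.a$) and satisfies $(\pi\cdot X)\sigma=\pi\bullet(X\sigma)$. $\mathrm{FA^{-s}}(t)$ is the set of atoms free in $t$ ignoring suspensions: $\mathrm{FA^{-s}}(f(t_1,\dots,t_n))=\bigcup_i\mathrm{FA^{-s}}(t_i)$, $\mathrm{FA^{-s}}(a)=\{a\}$, $\mathrm{FA^{-s}}(a.t)=\mathrm{FA^{-s}}(t)\setminus\{a\}$, $\mathrm{FA^{-s}}(\pi\cdot X)=\emptyset$. $\sigma$ respects $\nabla$ if for every variable $X$, $\mathrm{FA^{-s}}(X\sigma)\cap\{a\mid a\# X\in\nabla\}=\emptyset$. The algorithm ${\sf FC}$ on a finite set $F$ of formulas $a\# t$: starting from $F;\emptyset$, apply as long as possible: $\{a\# b\}\uplus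 F';\Delta\Rightarrow F';\Delta$ if $a\neq b$; $\{a\# a.t\}\uplus F';\Delta\Rightarrow F';\Delta$; $\{a\# b.t\}\uplus F';\Delta\Rightarrow\{a\# t\}\cup F';\Delta$ if $a\neq b$; $\{a\# f(t_1,\dots,t_n)\}\uplus F';\Delta\Rightarrow \{a\# t_1,\dots,a\# t_n\}\cup F';\Delta$; $\{a\#\pi\cdot X\}\uplus F';\Delta\Rightarrow F';\{\pi^{-1}\bullet a\# X\}\cup\Delta$. The terminal state is $\emptyset;\Delta$ (then ${\sf FC}(F)=\Delta$) or contains some $a\# a$ (then ${\sf FC}(F)=\bot$). For a freshness context $\nabla$ and substitution $\sigma$, $\nabla\sigma:={\sf FC}(\{a\# X\sigma\mid a\# X\in\nabla\})$. *)

theory Defs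
  imports Main
begin

text \<open>Atoms have type 'a, variables type 'v, function symbols type 'f.
  A permutation is a list of swappings; the list [s1,...,sn] denotes s1 s2 ... sn,
  acting right to left.\<close>

type_synonym 'a perm = "('a \<times> 'a) list"

datatype ('f, 'a, 'v) trm =
    Fn 'f "('f, 'a, 'v) trm list"
  | At 'a
  | Abs 'a "('f, 'a, 'v) trm"
  | Susp "'a perm" 'v

definition swap_atom :: "'a \<times> 'a \<Rightarrow> 'a \<Rightarrow> 'a" where
  "swap_atom s c = (if c = fst s then snd s else if c = snd s then fst s else c)"

fun perm_atom :: "'a perm \<Rightarrow> 'a \<Rightarrow> 'a" where
  "perm_atom [] c = c"
| "perm_atom (s # p) c = swap_atom s (perm_atom p c)"

definition perm_inv :: "'a perm \<Rightarrow> 'a perm" where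
  "perm_inv p = rev p"

fun perm_trm :: "'a perm \<Rightarrow> ('f, 'a, 'v) trm \<Rightarrow> ('f, 'a, 'v) trm" where
  "perm_trm p (Fn f ts) = Fn f (map (perm_trm p) ts)"
| "perm_trm p (At a) = At (perm_atom p a)"
| "perm_trm p (Abs a t) = Abs (perm_atom p a) (perm_trm p t)"
| "perm_trm p (Susp q X) = Susp (p @ q) X"

text \<open>Substitutions (capture-allowing application).\<close>
type_synonym ('f, 'a, 'v) subst = "'v \<Rightarrow> ('f, 'a, 'v) trm"

fun subst_trm :: "('f, 'a, 'v) subst \<Rightarrow> ('f, 'a, 'v) trm \<Rightarrow> ('f, 'a, 'v) trm" where
  "subst_trm \<sigma> (Fn f ts) = Fn f (map (subst_trm \<sigma>) ts)"
| "subst_trm \<sigma> (At a) = At a"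
| "subst_trm \<sigma> (Abs a t) = Abs a (subst_trm \<sigma> t)"
| "subst_trm \<sigma> (Susp p X) = perm_trm p (\<sigma> X)"

fun FA_s :: "('f, 'a, 'v) trm \<Rightarrow> 'a set" where
  "FA_s (Fn f ts) = (\<Union>t \<in> set ts. FA_s t)"
| "FA_s (At a) = {a}"
| "FA_s (Abs a t) = FA_s t - {a}"
| "FA_s (Susp p X) = {}"

text \<open>A freshness context is a finite set of constraints a # X, encoded as pairs (a, X).\<close>
definition respects_ctx :: "('f, 'a, 'v) subst \<Rightarrow> ('a \<times> 'v) set \<Rightarrow> bool" where
  "respects_ctx \<sigma> Nab \<longleftrightarrow> (\<forall>X. FA_s (\<sigma> X) \<inter> {a. (a, X) \<in> Nab} = {})"

text \<open>States F;Delta: F a set of freshness formulas a # t (pairs (a,t)),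
  Delta a set of constraints a # X.\<close>
type_synonym ('f, 'a, 'v) fc_state = "('a \<times> ('f, 'a, 'v) trm) set \<times> ('a \<times> 'v) set"

inductive fc_step :: "('f, 'a, 'v) fc_state \<Rightarrow> ('f, 'a, 'v) fc_state \<Rightarrow> bool" where
  atom: "(a, At b) \<in> F \<Longrightarrow> a \<noteq> b \<Longrightarrow> fc_step (F, \<Delta>) (F - {(a, At b)}, \<Delta>)"
| abs_same: "(a, Abs a t) \<in> F \<Longrightarrow> fc_step (F, \<Delta>) (F - {(a, Abs a t)}, \<Delta>)"
| abs_diff: "(a, Abs b t) \<in> F \<Longrightarrow> a \<noteq> b \<Longrightarrow>
      fc_step (F, \<Delta>) (insert (a, t) (F - {(a, Abs b t)}), \<Delta>)"
| fn: "(a, Fn f ts) \<in> F \<Longrightarrow>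
      fc_step (F, \<Delta>) ((F - {(a, Fn f ts)}) \<union> {(a, t) | t. t \<in> set ts}, \<Delta>)"
| susp: "(a, Susp p X) \<in> F \<Longrightarrow>
      fc_step (F, \<Delta>) (F - {(a, Susp p X)}, insert (perm_atom (perm_inv p) a, X) \<Delta>)"

definition fc_terminal :: "('f, 'a, 'v) fc_state \<Rightarrow> bool" where
  "fc_terminal S \<longleftrightarrow> (\<nexists>S'. fc_step S S')"

text \<open>Result of FC: Some Delta if the terminal state is emptyset;Delta, None (= bottom) if
  the terminal state still contains formulas (necessarily of the form a # a).\<close>
definition FC :: "('a \<times> ('f, 'a, 'v) trm) set \<Rightarrow> ('a \<times> 'v) set option" where
  "FC F = (THE r. \<exists>S. fc_step\<^sup>*\<^sup>* (F, {}) S \<and> fc_terminal S \<and>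
                       r = (if fst S = {} then Some (snd S) else None))"

definition ctx_subst :: "('a \<times> 'v) set \<Rightarrow> ('f, 'a, 'v) subst \<Rightarrow> ('a \<times> 'v) set option" where
  "ctx_subst Nab \<sigma> = FC {(a, \<sigma> X) | a X. (a, X) \<in> Nab}"

end

theory Submission
  imports Defs
begin

fun sc :: "'a \<Rightarrow> ('f, 'a, 'v) trm \<Rightarrow> ('a \<times> 'v) set" where
  "sc a (Fn f ts) = (\<Union>t \<in> set ts. sc a t)"
| "sc a (At b) = {}"
| "sc a (Abs b t) = (if a = b then {} else sc a t)"
| "sc a (Susp p X) = {(perm_atom (perm_inv p) a, X)}"

fun msz :: "('f, 'a, 'v) trm \<Rightarrow> nat" where
  "msz (Fn f ts) = Suc (sum_list (map msz ts))"
| "msz (At b) = 1"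
| "msz (Abs b t) = Suc (msz t)"
| "msz (Susp p X) = 1"

definition badF :: "('a \<times> ('f, 'a, 'v) trm) set \<Rightarrow> bool" where
  "badF F \<longleftrightarrow> (\<exists>(a,t)\<in>F. a \<in> FA_s t)"

definition DF :: "('a \<times> ('f, 'a, 'v) trm) set \<Rightarrow> ('a \<times> 'v) set" where
  "DF F = (\<Union>(a,t)\<in>F. sc a t)"

definition mF :: "('a \<times> ('f, 'a, 'v) trm) set \<Rightarrow> nat" where
  "mF F = (\<Sum>(a,t)\<in>F. msz t)"

lemma sum_set_le_list: "sum (f::'b \<Rightarrow> nat) (set xs) \<le> sum_list (map f xs)"
proof (induction xs)
  case Nil then show ?case by simp
next
  case (Cons x xs)
  have "sum f (set (x # xs)) \<le> f x + sum f (set xs)"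
    by (simp add: sum.insert_if)
  then show ?case using Cons by simp
qed

lemma step_inv:
  assumes "fc_step S S'"
  shows "badF (fst S') = badF (fst S) \<and> snd S' \<union> DF (fst S') = snd S \<union> DF (fst S)"
  using assms
proof cases
  case (atom a b F \<Delta>)
  then show ?thesis unfolding badF_def DF_def by auto
next
  case (abs_same a t F \<Delta>)
  then show ?thesis unfolding badF_def DF_def by auto
next
  case (abs_diff a b t F \<Delta>)
  have 1: "badF (insert (a, t) (F - {(a, Abs b t)})) = badF F"
  proof
    assume "badF (insert (a, t) (F - {(a, Abs b t)}))"
    then obtain c u where cu: "(c, u) \<in> insert (a, t) (F - {(a, Abs b t)})" "c \<in> FA_s u"
      unfolding badF_def by auto
    show "badF F"
    proof (cases "(c, u) = (a, t)")
      case True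
      then have "a \<in> FA_s (Abs b t)" using cu abs_diff by auto
      then show ?thesis using abs_diff unfolding badF_def by blast
    next
      case False
      then show ?thesis using cu unfolding badF_def by blast
    qed
  next
    assume "badF F"
    then obtain c u where "(c, u) \<in> F" "c \<in> FA_s u" unfolding badF_def by auto
    then show "badF (insert (a, t) (F - {(a, Abs b t)}))"
      using abs_diff unfolding badF_def by (cases "(c, u) = (a, Abs b t)") auto
  qed
  have 2: "DF (insert (a, t) (F - {(a, Abs b t)})) = DF F"
  proof
    have "sc a t = sc a (Abs b t)" using abs_diff by simp
    then have "sc a t \<subseteq> DF F" using abs_diff unfolding DF_def by fastforce
    moreover have "DF (F - {(a, Abs b t)}) \<subseteq> DF F" unfolding DF_def by blast
    moreover have "DF (insert (a, t) (F - {(a, Abs b t)})) = sc a t \<union> DF (F - {(a, Abs b t)})"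
      unfolding DF_def by simp
    ultimately show "DF (insert (a, t) (F - {(a, Abs b t)})) \<subseteq> DF F" by blast
  next
    show "DF F \<subseteq> DF (insert (a, t) (F - {(a, Abs b t)}))"
    proof
      fix z assume "z \<in> DF F"
      then obtain c u where "(c, u) \<in> F" "z \<in> sc c u" unfolding DF_def by auto
      then show "z \<in> DF (insert (a, t) (F - {(a, Abs b t)}))"
        using abs_diff unfolding DF_def by (cases "(c, u) = (a, Abs b t)") auto
    qed
  qed
  show ?thesis using 1 2 abs_diff by simp
next
  case (fn a f ts F \<Delta>)
  define G where "G = F - {(a, Fn f ts)}"
  define N where "N = {(a, t) | t. t \<in> set ts}"
  have FG: "F = insert (a, Fn f ts) G" using fn unfolding G_def by blast
  have b1: "badF (G \<union> N) = (badF G \<or> badF N)" unfolding badF_def by blast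
  have b2: "badF N = (a \<in> FA_s (Fn f ts))" unfolding badF_def N_def by auto
  have b3: "badF F = (badF G \<or> a \<in> FA_s (Fn f ts))" unfolding FG badF_def by auto
  have d1: "DF (G \<union> N) = DF G \<union> DF N" unfolding DF_def by blast
  have d2: "DF N = sc a (Fn f ts)" unfolding DF_def N_def by auto
  have d3: "DF F = DF G \<union> sc a (Fn f ts)" unfolding FG DF_def by auto
  show ?thesis using fn b1 b2 b3 d1 d2 d3 unfolding G_def N_def by auto
next
  case (susp a p X F \<Delta>)
  then show ?thesis unfolding badF_def DF_def by fastforce
qed

lemma steps_inv:
  assumes "fc_step\<^sup>*\<^sup>* S S'"
  shows "badF (fst S') = badF (fst S) \<and> snd S' \<union> DF (fst S') = snd S \<union> DF (fst S)"
  using assms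
  by (induction rule: rtranclp_induct) (auto dest: step_inv)

lemma terminal_shape:
  assumes "fc_terminal S" "(a, t) \<in> fst S"
  shows "t = At a"
proof (cases t)
  case (Fn f ts)
  obtain F \<Delta> where S: "S = (F, \<Delta>)" by (cases S)
  then show ?thesis using assms Fn fc_step.fn[of a f ts F \<Delta>] unfolding fc_terminal_def by auto
next
  case (At b)
  obtain F \<Delta> where S: "S = (F, \<Delta>)" by (cases S)
  then show ?thesis using assms At fc_step.atom[of a b F \<Delta>] unfolding fc_terminal_def by auto
next
  case (Abs b u)
  obtain F \<Delta> where S: "S = (F, \<Delta>)" by (cases S)
  then show ?thesis using assms Abs fc_step.abs_diff[of a b u F \<Delta>] fc_step.abs_same[of a u F \<Delta>]
    unfolding fc_terminal_def by (cases "a = b") auto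
next
  case (Susp p X)
  obtain F \<Delta> where S: "S = (F, \<Delta>)" by (cases S)
  then show ?thesis using assms Susp fc_step.susp[of a p X F \<Delta>] unfolding fc_terminal_def by auto
qed

lemma step_finite_decr:
  assumes "fc_step (F, \<Delta>) (F', \<Delta>')" "finite F"
  shows "finite F' \<and> mF F' < mF F"
  using assms(1)
proof cases
  case (atom a b)
  then show ?thesis using assms(2) unfolding mF_def
    by (auto simp: sum.remove[of F "(a, At b)"])
next
  case (abs_same a t)
  then show ?thesis using assms(2) unfolding mF_def
    by (auto simp: sum.remove[of F "(a, Abs a t)"])
next
  case (abs_diff a b t)
  have "mF F' \<le> mF (F - {(a, Abs b t)}) + msz t"
    unfolding abs_diff mF_def using assms(2)
    by (simp add: sum.insert_if)
  moreover have "mF F = mF (F - {(a, Abs b t)}) + msz (Abs b t)"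
    unfolding mF_def using assms(2) abs_diff by (simp add: sum.remove)
  ultimately show ?thesis using assms(2) abs_diff by auto
next
  case (fn a f ts)
  have e: "{(a, t) | t. t \<in> set ts} = Pair a ` set ts" by auto
  have fin: "finite {(a, t) | t. t \<in> set ts}" unfolding e by simp
  have "mF F' \<le> mF (F - {(a, Fn f ts)}) + mF {(a, t) | t. t \<in> set ts}"
    unfolding fn mF_def using assms(2) fin by (simp add: sum_Un_nat)
  moreover have "mF {(a, t) | t. t \<in> set ts} = sum msz (set ts)"
    unfolding e mF_def by (simp add: sum.reindex inj_on_def)
  moreover have "sum msz (set ts) \<le> sum_list (map msz ts)" by (rule sum_set_le_list)
  moreover have "mF F = mF (F - {(a, Fn f ts)}) + msz (Fn f ts)"
    unfolding mF_def using assms(2) fn by (simp add: sum.remove)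
  ultimately show ?thesis using assms(2) fn fin by auto
next
  case (susp a p X)
  then show ?thesis using assms(2) unfolding mF_def
    by (auto simp: sum.remove[of F "(a, Susp p X)"])
qed

lemma exists_terminal:
  "finite F \<Longrightarrow> \<exists>S. fc_step\<^sup>*\<^sup>* (F, \<Delta>) S \<and> fc_terminal S"
proof (induction "mF F" arbitrary: F \<Delta> rule: less_induct)
  case less
  show ?case
  proof (cases "fc_terminal (F, \<Delta>)")
    case True then show ?thesis by blast
  next
    case False
    then obtain S' where st: "fc_step (F, \<Delta>) S'" unfolding fc_terminal_def by blast
    obtain F' \<Delta>' where S': "S' = (F', \<Delta>')" by (cases S')
    have "finite F' \<and> mF F' < mF F" using step_finite_decr st S' less.prems by blast
    then obtain S where "fc_step\<^sup>*\<^sup>* (F', \<Delta>') S \<and> fc_terminal S" using less.hyps by blast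
    then show ?thesis using st S' by (meson converse_rtranclp_into_rtranclp)
  qed
qed

lemma FC_result:
  assumes "finite F"
  shows "FC F = (if badF F then None else Some (DF F))"
proof -
  have key: "(if fst S = {} then Some (snd S) else None) = (if badF F then None else Some (DF F))"
    if r: "fc_step\<^sup>*\<^sup>* (F, {}) S" and t: "fc_terminal S" for S
  proof -
    have inv: "badF (fst S) = badF F \<and> snd S \<union> DF (fst S) = DF F"
      using steps_inv[OF r] by simp
    have sh: "\<forall>(a,u)\<in>fst S. u = At a" using terminal_shape[OF t] by blast
    have "badF (fst S) \<longleftrightarrow> fst S \<noteq> {}"
      using sh unfolding badF_def by fastforce
    moreover have "DF (fst S) = {}" using sh unfolding DF_def by fastforce
    ultimately show ?thesis using inv by auto
  qed
  obtain S where "fc_step\<^sup>*\<^sup>* (F, {}) S" "fc_terminal S" using exists_terminal[OF assms] by blast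
  then show ?thesis unfolding FC_def
    apply -
    apply (rule the_equality)
     apply (rule exI[of _ S])
     apply (simp add: key)
    using key by blast
qed

theorem lemma1:
  fixes \<sigma> :: "('f, 'a, 'v) subst" and Nab :: "('a \<times> 'v) set"
  assumes "finite Nab"
  shows "respects_ctx \<sigma> Nab \<longleftrightarrow> ctx_subst Nab \<sigma> \<noteq> None"
proof -
  have e: "{(a, \<sigma> X) | a X. (a, X) \<in> Nab} = (\<lambda>(a, X). (a, \<sigma> X)) ` Nab" by auto
  have fin: "finite {(a, \<sigma> X) | a X. (a, X) \<in> Nab}" unfolding e using assms by simp
  have "respects_ctx \<sigma> Nab \<longleftrightarrow> \<not> badF {(a, \<sigma> X) | a X. (a, X) \<in> Nab}"
    unfolding respects_ctx_def badF_def by blast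
  then show ?thesis unfolding ctx_subst_def FC_result[OF fin] by simp
qed

end
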